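(* Let $\mathbf U$ be a group variety. Every finite connected directed graph $\Gamma$ which is minimal, in the minor ordering among finite connected directed graphs, with respect to not having property $\mathrm{P}(\mathbf U)$ (that is, $\Gamma$ does not have $\mathrm{P}(\mathbf U)$, and every connected minor $\Delta$ of $\Gamma$ that does not have $\mathrm{P}(\mathbf U)$ has $\Gamma$ as a minor) is two-edge-connected and has no loops.
   Context: All graphs are finite directed graphs, possibly with loops and multiple edges. A graph $\Gamma$ has vertex set $V(\Gamma)$ and edge set $E(\Gamma)$, and each edge $e$ has an initial vertex $\iota e$ and a terminal vertex $\tau e$; a loop is an edge with $\iota e=\tau e$. A subgraph is regarded as a set of vertices and edges (containing the endpoints of its edges); unions and intersections of subgraphs are taken as sets of vertices and edges. Connectedness and two-edge-connectedness refer to the underlying undirected multigraph (two-edge-connected: connected and remains connected after removing any one edge). Let $\overline{\Gamma}$ be the graph with vertex set $V(\Gamma)$ and edge set $E(\Gamma)\sqcup E(\Gamma)^{-1}$, where for $e\in E(\Gamma)$ the formal edge $e^{-1}$ goes from $\tau e$ to $\iota e$. A path $p$ in $\overline{\Gamma}$ is either an empty path at a vertex or a sequence $e_1\cdots e_n$ of edges of $\overline{\Gamma}$ with $\tau e_i=\iota e_{i+1}$; it has initial vertex $\iota p$ and terminal vertex $\tau p$, and is regarded as a word over the alphabet $E(\Gamma)\cup E(\Gamma)^{-1}$. The span $\langle p\rangle$ is the subgraph of $\Gamma$ consisting of the vertices traversed by $p$ and the edges $e\in E(\Gamma)$ such that $e$ or $e^{-1}$ occurs in $p$. For a group variety $\mathbf{U}$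 and words $u,v$ over $X\cup X^{-1}$, write $u\equiv_{\mathbf U} v$ if $u$ and $v$ represent the same element of the relatively free group of $\mathbf U$ on $X$ (i.e. the identity $u=v$ holds in $\mathbf U$), and $[u]_{\mathbf U}$ for the class of $u$. The free $g\mathbf U$-category on $\Gamma$ has vertex set $V(\Gamma)$; its arrows from $i$ to $j$ are the triples $(i,[p]_{\mathbf U},j)$ with $p$ an $(i,j)$-path in $\overline\Gamma$, and $(i,[p]_{\mathbf U},j)(j,[q]_{\mathbf U},k)=(i,[pq]_{\mathbf U},k)$; for an arrow $x=(i,[p]_{\mathbf U},j)$ put $\iota x=i$, $\tau x=j$. For each arrow $x$ define subgraphs of $\Gamma$: $C_0(x)=\bigcap\{\langle p\rangle : p \text{ a path in }\overline\Gamma \text{ with } (\iota p,[p]_{\mathbf U},\tau p)=x\}$; $P_n(x)$ is the connected component of $C_n(x)$ containing $\iota x$; $C_{n+1}(x)=\bigcap\{P_n(x_1)\cup\cdots\cup P_n(x_k) : k\ge 1,\ x_1,\dots,x_k \text{ arrows with } x_1\cdots x_k=x\}$; and $P(x)=\bigcap_{n\ge 0}P_n(x)$. A connected graph $\Gamma$ has property $\mathrm{P}(\mathbf U)$ if $\tau x\in P(x)$ for every arrow $x$ of the free $g\mathbf U$-category on $\Gamma$. A graph $\Delta$ is a minor of $\Gamma$ if $\Delta$ can be obtained from $\Gamma$ by a finite sequence of the following operations: contracting an edge $e$ with $\iota e\neq\tau e$ (removing $e$ and identifying its two endpoints into one vertex), deleting an edge, deleting a vertex together with its incident edges, and reversing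 the direction of an edge. *)

theory Defs
  imports "Graph_Theory.Graph_Theory"
begin

text \<open>A letter over alphabet X is a pair (x, b); b = False means x, b = True means x^-1.
  Words are lists of letters.  A group variety U is given by a set L of laws
  (pairs of words in countably many variables, indexed by nat); every variety is of this form.
  The relation uequiv L u v means that u and v represent the same element of the
  relatively free group of U on X, i.e. the free group on X modulo the verbal subgroup
  (fully invariant congruence) generated by the laws L.\<close>

type_synonym 'x word = "('x \<times> bool) list"

definition inv_letter :: "'x \<times> bool \<Rightarrow> 'x \<times> bool" where
  "inv_letter l = (fst l, \<not> snd l)"

definition inv_word :: "'x word \<Rightarrow> 'x word" where
  "inv_word w = rev (map inv_letter w)"

definition subst_word :: "(nat \<Rightarrow> 'x word) \<Rightarrow> nat word \<Rightarrow> 'x word" where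
  "subst_word \<sigma> w = concat (map (\<lambda>(n, b). if b then inv_word (\<sigma> n) else \<sigma> n) w)"

inductive uequiv :: "(nat word \<times> nat word) set \<Rightarrow> 'x word \<Rightarrow> 'x word \<Rightarrow> bool"
  for L :: "(nat word \<times> nat word) set" where
  ue_refl: "uequiv L w w"
| ue_sym: "uequiv L u v \<Longrightarrow> uequiv L v u"
| ue_trans: "uequiv L u v \<Longrightarrow> uequiv L v w \<Longrightarrow> uequiv L u w"
| ue_cong: "uequiv L u u' \<Longrightarrow> uequiv L v v' \<Longrightarrow> uequiv L (u @ v) (u' @ v')"
| ue_cancel: "uequiv L [l, inv_letter l] []"
| ue_law: "(p, q) \<in> L \<Longrightarrow> uequiv L (subst_word \<sigma> p) (subst_word \<sigma> q)"

definition lsrc :: "('v,'e) pre_digraph \<Rightarrow> 'e \<times> bool \<Rightarrow> 'v" where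
  "lsrc G l = (if snd l then head G (fst l) else tail G (fst l))"

definition ltgt :: "('v,'e) pre_digraph \<Rightarrow> 'e \<times> bool \<Rightarrow> 'v" where
  "ltgt G l = (if snd l then tail G (fst l) else head G (fst l))"

text \<open>gpath G i p j: p is an (i,j)-path in the doubled graph of G.\<close>
fun gpath :: "('v,'e) pre_digraph \<Rightarrow> 'v \<Rightarrow> 'e word \<Rightarrow> 'v \<Rightarrow> bool" where
  "gpath G i [] j \<longleftrightarrow> i \<in> verts G \<and> i = j"
| "gpath G i (l # p) j \<longleftrightarrow> fst l \<in> arcs G \<and> i \<in> verts G \<and> lsrc G l = i \<and> gpath G (ltgt G l) p j"

type_synonym ('v,'e) sgraph = "'v set \<times> 'e set"

definition sg_Inter :: "('v,'e) sgraph set \<Rightarrow> ('v,'e) sgraph" where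
  "sg_Inter S = (\<Inter> (fst ` S), \<Inter> (snd ` S))"

definition sg_Union :: "('v,'e) sgraph set \<Rightarrow> ('v,'e) sgraph" where
  "sg_Union S = (\<Union> (fst ` S), \<Union> (snd ` S))"

definition span :: "('v,'e) pre_digraph \<Rightarrow> 'v \<Rightarrow> 'e word \<Rightarrow> ('v,'e) sgraph" where
  "span G i p = (insert i (lsrc G ` set p \<union> ltgt G ` set p), fst ` set p)"

definition sg_comp :: "('v,'e) pre_digraph \<Rightarrow> ('v,'e) sgraph \<Rightarrow> 'v \<Rightarrow> ('v,'e) sgraph" where
  "sg_comp G S v =
    (let A = {(tail G e, head G e) | e. e \<in> snd S} \<union> {(head G e, tail G e) | e. e \<in> snd S};
         W = {w \<in> fst S. (v, w) \<in> A\<^sup>*}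
     in (W, {e \<in> snd S. tail G e \<in> W \<and> head G e \<in> W}))"

text \<open>An arrow (i, [p], j) is represented by any triple (i, p, j) with gpath G i p j;
  two triples represent the same arrow iff their endpoints agree and the words are uequiv.\<close>
type_synonym ('v,'e) arrow = "'v \<times> 'e word \<times> 'v"

definition is_arrow :: "('v,'e) pre_digraph \<Rightarrow> ('v,'e) arrow \<Rightarrow> bool" where
  "is_arrow G x \<longleftrightarrow> gpath G (fst x) (fst (snd x)) (snd (snd x))"

definition factorization ::
  "(nat word \<times> nat word) set \<Rightarrow> ('v,'e) pre_digraph \<Rightarrow> ('v,'e) arrow list \<Rightarrow> ('v,'e) arrow \<Rightarrow> bool" where
  "factorization L G ys x \<longleftrightarrow> ys \<noteq> [] \<and> (\<forall>y \<in> set ys. is_arrow G y)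
     \<and> (\<forall>t. Suc t < length ys \<longrightarrow> snd (snd (ys ! t)) = fst (ys ! Suc t))
     \<and> fst (hd ys) = fst x \<and> snd (snd (last ys)) = snd (snd x)
     \<and> uequiv L (concat (map (\<lambda>y. fst (snd y)) ys)) (fst (snd x))"

definition C0 :: "(nat word \<times> nat word) set \<Rightarrow> ('v,'e) pre_digraph \<Rightarrow> ('v,'e) arrow \<Rightarrow> ('v,'e) sgraph" where
  "C0 L G x = sg_Inter {span G (fst x) q | q. gpath G (fst x) q (snd (snd x)) \<and> uequiv L q (fst (snd x))}"

primrec Cn :: "(nat word \<times> nat word) set \<Rightarrow> ('v,'e) pre_digraph \<Rightarrow> nat \<Rightarrow> ('v,'e) arrow \<Rightarrow> ('v,'e) sgraph" where
  "Cn L G 0 x = C0 L G x"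
| "Cn L G (Suc n) x = sg_Inter {sg_Union ((\<lambda>y. sg_comp G (Cn L G n y) (fst y)) ` set ys) | ys. factorization L G ys x}"

definition Pn :: "(nat word \<times> nat word) set \<Rightarrow> ('v,'e) pre_digraph \<Rightarrow> nat \<Rightarrow> ('v,'e) arrow \<Rightarrow> ('v,'e) sgraph" where
  "Pn L G n x = sg_comp G (Cn L G n x) (fst x)"

definition Pinf :: "(nat word \<times> nat word) set \<Rightarrow> ('v,'e) pre_digraph \<Rightarrow> ('v,'e) arrow \<Rightarrow> ('v,'e) sgraph" where
  "Pinf L G x = sg_Inter (range (\<lambda>n. Pn L G n x))"

text \<open>Property P(U) (connectedness of the graph is assumed separately).\<close>
definition propP :: "(nat word \<times> nat word) set \<Rightarrow> ('v,'e) pre_digraph \<Rightarrow> bool" where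
  "propP L G \<longleftrightarrow> (\<forall>x. is_arrow G x \<longrightarrow> snd (snd x) \<in> fst (Pinf L G x))"

definition contract_arc :: "('v,'e) pre_digraph \<Rightarrow> 'e \<Rightarrow> ('v,'e) pre_digraph" where
  "contract_arc G e =
    (let r = (\<lambda>v. if v = head G e then tail G e else v)
     in \<lparr> verts = verts G - {head G e}, arcs = arcs G - {e},
          tail = (\<lambda>a. r (tail G a)), head = (\<lambda>a. r (head G a)) \<rparr>)"

definition reverse_arc :: "('v,'e) pre_digraph \<Rightarrow> 'e \<Rightarrow> ('v,'e) pre_digraph" where
  "reverse_arc G e =
    \<lparr> verts = verts G, arcs = arcs G,
      tail = (\<lambda>a. if a = e then head G e else tail G a),
      head = (\<lambda>a. if a = e then tail G e else head G a) \<rparr>"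

inductive minor_step :: "('v,'e) pre_digraph \<Rightarrow> ('v,'e) pre_digraph \<Rightarrow> bool" where
  ms_contract: "e \<in> arcs G \<Longrightarrow> tail G e \<noteq> head G e \<Longrightarrow> minor_step G (contract_arc G e)"
| ms_del_arc: "e \<in> arcs G \<Longrightarrow> minor_step G (pre_digraph.del_arc G e)"
| ms_del_vert: "v \<in> verts G \<Longrightarrow> minor_step G (pre_digraph.del_vert G v)"
| ms_reverse: "e \<in> arcs G \<Longrightarrow> minor_step G (reverse_arc G e)"

definition is_minor :: "('v,'e) pre_digraph \<Rightarrow> ('v,'e) pre_digraph \<Rightarrow> bool" where
  "is_minor D G \<longleftrightarrow> (\<exists>H. minor_step\<^sup>*\<^sup>* G H \<and> digraph_iso H D)"

definition two_edge_connected :: "('v,'e) pre_digraph \<Rightarrow> bool" where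
  "two_edge_connected G \<longleftrightarrow> connected G \<and> (\<forall>e \<in> arcs G. connected (pre_digraph.del_arc G e))"

end

theory Submission
  imports Defs
begin


definition sle :: "('v,'e) sgraph \<Rightarrow> ('v,'e) sgraph \<Rightarrow> bool" where
  "sle S T \<longleftrightarrow> fst S \<subseteq> fst T \<and> snd S \<subseteq> snd T"

definition closed_sg :: "('v,'e) pre_digraph \<Rightarrow> ('v,'e) sgraph \<Rightarrow> bool" where
  "closed_sg G S \<longleftrightarrow> (\<forall>a \<in> snd S. tail G a \<in> fst S \<and> head G a \<in> fst S)"

definition crel :: "('v,'e) pre_digraph \<Rightarrow> 'e set \<Rightarrow> ('v \<times> 'v) set" where
  "crel G E = {(tail G a, head G a) | a. a \<in> E} \<union> {(head G a, tail G a) | a. a \<in> E}"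

lemma sg_comp_eq: "sg_comp G S v = ({y \<in> fst S. (v,y) \<in> (crel G (snd S))\<^sup>*},
   {a \<in> snd S. tail G a \<in> {y \<in> fst S. (v,y) \<in> (crel G (snd S))\<^sup>*} \<and> head G a \<in> {y \<in> fst S. (v,y) \<in> (crel G (snd S))\<^sup>*}})"
  unfolding sg_comp_def crel_def Let_def by simp

lemma fst_sg_Inter[simp]: "fst (sg_Inter F) = \<Inter> (fst ` F)" by (simp add: sg_Inter_def)
lemma snd_sg_Inter[simp]: "snd (sg_Inter F) = \<Inter> (snd ` F)" by (simp add: sg_Inter_def)
lemma fst_sg_Union[simp]: "fst (sg_Union F) = \<Union> (fst ` F)" by (simp add: sg_Union_def)
lemma snd_sg_Union[simp]: "snd (sg_Union F) = \<Union> (snd ` F)" by (simp add: sg_Union_def)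

lemma sle_refl[simp]: "sle S S" by (simp add: sle_def)
lemma sle_trans: "sle A B \<Longrightarrow> sle B C \<Longrightarrow> sle A C" by (auto simp: sle_def)
lemma sg_Inter_lb: "S \<in> F \<Longrightarrow> sle (sg_Inter F) S" by (auto simp: sle_def sg_Inter_def)
lemma sg_Inter_glb: "(\<And>S. S \<in> F \<Longrightarrow> sle X S) \<Longrightarrow> sle X (sg_Inter F)" by (auto simp: sle_def sg_Inter_def)
lemma sg_Union_ub: "S \<in> F \<Longrightarrow> sle S (sg_Union F)" by (auto simp: sle_def sg_Union_def)
lemma sg_Union_lub: "(\<And>S. S \<in> F \<Longrightarrow> sle S X) \<Longrightarrow> sle (sg_Union F) X" by (auto simp: sle_def sg_Union_def)

lemma closed_comp: "closed_sg G (sg_comp G S v)"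
  by (auto simp: closed_sg_def sg_comp_eq)
lemma closed_span: "closed_sg G (span G i p)"
  by (force simp: closed_sg_def span_def lsrc_def ltgt_def)
lemma closed_Inter: "(\<And>S. S \<in> F \<Longrightarrow> closed_sg G S) \<Longrightarrow> closed_sg G (sg_Inter F)"
  by (auto simp: closed_sg_def sg_Inter_def)
lemma closed_Union: "(\<And>S. S \<in> F \<Longrightarrow> closed_sg G S) \<Longrightarrow> closed_sg G (sg_Union F)"
  unfolding closed_sg_def by (simp, blast)

lemma closed_Cn: "closed_sg G (Cn L G n x)"
  apply (cases n)
   apply (auto simp: C0_def intro!: closed_Inter closed_span)[1]
  apply (auto intro!: closed_Inter closed_Union closed_comp)
  done

lemma comp_start: "v \<in> fst S \<Longrightarrow> v \<in> fst (sg_comp G S v)"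
  by (simp add: sg_comp_eq)

lemma comp_sub: "sle (sg_comp G S v) S"
  by (auto simp: sg_comp_eq sle_def)

lemma span_start: "i \<in> fst (span G i p)" by (simp add: span_def)

lemma gpath_uequiv_self: "is_arrow G x \<Longrightarrow> uequiv L (fst (snd x)) (fst (snd x))"
  by (rule ue_refl)

lemma fact_single: "is_arrow G x \<Longrightarrow> factorization L G [x] x"
  by (simp add: factorization_def ue_refl)

lemma start_Cn: "is_arrow G x \<Longrightarrow> fst x \<in> fst (Cn L G n x)"
proof (induction n arbitrary: x)
  case 0
  then show ?case by (auto simp: C0_def sg_Inter_def span_def)
next
  case (Suc n)
  show ?case
  proof -
    { fix ys assume f: "factorization L G ys x"
      then have "ys \<noteq> []" "is_arrow G (hd ys)" "fst (hd ys) = fst x" by (auto simp: factorization_def)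
      then have "fst x \<in> fst (sg_comp G (Cn L G n (hd ys)) (fst (hd ys)))"
        using Suc.IH comp_start by metis
      moreover have "hd ys \<in> set ys" using \<open>ys \<noteq> []\<close> by simp
      ultimately have "fst x \<in> fst (sg_Union ((\<lambda>y. sg_comp G (Cn L G n y) (fst y)) ` set ys))"
        by (auto simp: sg_Union_def) }
    then show ?thesis by (simp only: Cn.simps fst_sg_Inter) blast
  qed
qed



abbreviation hw :: "'e \<Rightarrow> 'e word \<Rightarrow> 'e word" where
  "hw e p \<equiv> filter (\<lambda>l. fst l \<noteq> e) p"

lemma filter_inv_word: "hw e (inv_word w) = inv_word (hw e w)"
  by (induction w) (auto simp: inv_word_def inv_letter_def)

lemma filter_subst: "hw e (subst_word \<sigma> p) = subst_word (\<lambda>n. hw e (\<sigma> n)) p"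
  by (induction p) (auto simp: subst_word_def filter_inv_word)

lemma uequiv_filter: "uequiv L u v \<Longrightarrow> uequiv L (hw e u) (hw e v)"
proof (induction rule: uequiv.induct)
  case (ue_refl w) then show ?case by (rule uequiv.ue_refl)
next
  case (ue_sym u v) show ?case using ue_sym.IH by (rule uequiv.ue_sym)
next
  case (ue_trans u v w) show ?case using ue_trans.IH by (rule uequiv.ue_trans)
next
  case (ue_cong u u' v v') then show ?case by (simp add: uequiv.ue_cong)
next
  case (ue_cancel l) show ?case using uequiv.ue_cancel[of L l] by (auto simp: inv_letter_def intro: uequiv.ue_refl)
next
  case (ue_law p q \<sigma>) then show ?case by (simp add: filter_subst uequiv.ue_law)
qed



lemma Cn_Suc': "Cn L G (Suc n) x = sg_Inter {sg_Union (Pn L G n ` set ys) | ys. factorization L G ys x}"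
  by (simp add: Pn_def[abs_def])

definition F0 :: "(nat word \<times> nat word) set \<Rightarrow> ('v,'e) pre_digraph \<Rightarrow> ('v,'e) arrow \<Rightarrow> ('v,'e) sgraph set" where
  "F0 L G z = {span G (fst z) q | q. gpath G (fst z) q (snd (snd z)) \<and> uequiv L q (fst (snd z))}"

definition F1 :: "(nat word \<times> nat word) set \<Rightarrow> ('v,'e) pre_digraph \<Rightarrow> nat \<Rightarrow> ('v,'e) arrow \<Rightarrow> ('v,'e) sgraph set" where
  "F1 L G n z = {sg_Union (Pn L G n ` set ys) | ys. factorization L G ys z}"

lemma Cn0_F0: "Cn L G 0 z = sg_Inter (F0 L G z)" by (simp add: C0_def F0_def)
lemma CnS_F1: "Cn L G (Suc n) z = sg_Inter (F1 L G n z)" by (simp only: Cn_Suc' F1_def)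

lemma F0_ne: "is_arrow G z \<Longrightarrow> F0 L G z \<noteq> {}"
proof -
  assume a: "is_arrow G z"
  have "span G (fst z) (fst (snd z)) \<in> F0 L G z"
    unfolding F0_def mem_Collect_eq
    by (rule exI[of _ "fst (snd z)"]) (use a in \<open>simp add: is_arrow_def ue_refl\<close>)
  then show ?thesis by blast
qed
lemma F1_ne: "is_arrow G z \<Longrightarrow> F1 L G n z \<noteq> {}"
proof -
  assume a: "is_arrow G z"
  have "sg_Union (Pn L G n ` set [z]) \<in> F1 L G n z"
    unfolding F1_def mem_Collect_eq
    by (rule exI[of _ "[z]"]) (use fact_single[OF a] in simp)
  then show ?thesis by blast
qed

locale ctr =
  fixes G :: "('v,'e) pre_digraph" and D :: "('v,'e) pre_digraph" and e :: 'e and u w :: 'v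
    and r :: "'v \<Rightarrow> 'v"
  assumes e_in: "e \<in> arcs G" and u_def: "u = tail G e" and w_def: "w = head G e"
  and r_def: "r = (\<lambda>v. if v = w then u else v)"
  and arcsD: "arcs D = arcs G - {e}" and vertsD: "verts D = r ` verts G"
  and tailD: "\<And>a. tail D a = r (tail G a)" and headD: "\<And>a. head D a = r (head G a)"
begin

definition H :: "('v,'e) arrow \<Rightarrow> ('v,'e) arrow" where
  "H z = (r (fst z), hw e (fst (snd z)), r (snd (snd z)))"

definition cimg :: "('v,'e) sgraph \<Rightarrow> ('v,'e) sgraph" where
  "cimg S = (r ` fst S, snd S - {e})"

lemma r_u[simp]: "r u = u" by (simp add: r_def)
lemma r_w[simp]: "r w = u" by (simp add: r_def)
lemma r_other: "v \<noteq> w \<Longrightarrow> r v = v" by (simp add: r_def)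

lemma lsrcD: "lsrc D l = r (lsrc G l)" by (simp add: lsrc_def tailD headD)
lemma ltgtD: "ltgt D l = r (ltgt G l)" by (simp add: ltgt_def tailD headD)

lemma e_letter: "fst l = e \<Longrightarrow> r (lsrc G l) = r (ltgt G l)"
  by (auto simp: lsrc_def ltgt_def u_def[symmetric] w_def[symmetric])

lemma path_H: "gpath G i p j \<Longrightarrow> gpath D (r i) (hw e p) (r j)"
proof (induction p arbitrary: i)
  case Nil then show ?case by (auto simp: vertsD)
next
  case (Cons l p)
  then have l: "fst l \<in> arcs G" "i \<in> verts G" "lsrc G l = i" "gpath G (ltgt G l) p j" by auto
  show ?case
  proof (cases "fst l = e")
    case True
    then have "r i = r (ltgt G l)" using e_letter l(3) by metis
    then show ?thesis using Cons.IH[OF l(4)] True by simp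
  next
    case False
    then show ?thesis using Cons.IH[OF l(4)] l by (simp add: arcsD vertsD lsrcD ltgtD)
  qed
qed

lemma arrow_H: "is_arrow G z \<Longrightarrow> is_arrow D (H z)"
  by (simp add: is_arrow_def H_def path_H)

lemma span_H: "sle (span D (r i) (hw e p)) (cimg (span G i p))"
  by (auto simp: sle_def span_def cimg_def lsrcD ltgtD)

lemma fact_H:
  assumes "factorization L G ys x" shows "factorization L D (map H ys) (H x)"
proof -
  have c: "concat (map (\<lambda>y. fst (snd (H y))) ys) = hw e (concat (map (\<lambda>y. fst (snd y)) ys))"
    by (induction ys) (auto simp: H_def)
  have "uequiv L (concat (map (\<lambda>y. fst (snd y)) ys)) (fst (snd x))"
    using assms unfolding factorization_def by blast
  then have u: "uequiv L (hw e (concat (map (\<lambda>y. fst (snd y)) ys))) (hw e (fst (snd x)))"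
    by (rule uequiv_filter)
  show ?thesis using assms u unfolding factorization_def
    by (auto simp: arrow_H c hd_map last_map comp_def) (auto simp: H_def)
qed

lemma cimg_Union: "sle (sg_Union (cimg ` F)) (cimg (sg_Union F))"
  by (auto simp: sle_def cimg_def)

lemma cimg_mono: "sle S T \<Longrightarrow> sle (cimg S) (cimg T)"
  by (auto simp: sle_def cimg_def)

lemma inter_cimg:
  assumes "F \<noteq> {}" and ic: "(\<forall>S\<in>F. u \<in> fst S \<or> w \<in> fst S) \<longrightarrow> (\<forall>S\<in>F. u \<in> fst S) \<or> (\<forall>S\<in>F. w \<in> fst S)"
  shows "sle (sg_Inter (cimg ` F)) (cimg (sg_Inter F))"
proof -
  have V: "y \<in> r ` \<Inter> (fst ` F)" if y: "\<forall>S\<in>F. y \<in> r ` fst S" for y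
  proof (cases "y = u")
    case True
    then have "\<forall>S\<in>F. u \<in> fst S \<or> w \<in> fst S" using y by (auto simp: r_def split: if_splits)
    then have "(\<forall>S\<in>F. u \<in> fst S) \<or> (\<forall>S\<in>F. w \<in> fst S)" using ic by blast
    then show ?thesis using True by (metis (no_types, lifting) INT_I image_eqI r_u r_w)
  next
    case False
    then have "\<forall>S\<in>F. y \<in> fst S \<and> y \<noteq> w" using y by (auto simp: r_def split: if_splits)
    then have "y \<in> \<Inter> (fst ` F)" "r y = y" using assms(1) by (auto simp: r_def)
    then show ?thesis by (metis image_eqI)
  qed
  show ?thesis using assms(1) V by (auto simp: sle_def cimg_def)
qed

lemma comp_cimg:
  assumes cl: "closed_sg G S" and v: "v \<in> fst S"
    and ce: "u \<noteq> w \<longrightarrow> u \<in> fst S \<longrightarrow> w \<in> fst S \<longrightarrow> e \<in> snd S" and T: "sle T (cimg S)"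
  shows "sle (sg_comp D T (r v)) (cimg (sg_comp G S v))"
proof -
  define R where "R = crel G (snd S)"
  define RD where "RD = crel D (snd T)"
  define WG where "WG = {y \<in> fst S. (v,y) \<in> R\<^sup>*}"
  have X: "z \<in> WG" if y': "y' \<in> WG" and z: "z \<in> fst S" and rz: "r z = r y'" for y' z
  proof (cases "z = y'")
    case True then show ?thesis using y' by simp
  next
    case False
    then have uw: "(z = w \<and> y' = u \<or> z = u \<and> y' = w) \<and> u \<noteq> w" using rz by (auto simp: r_def split: if_splits)
    then have "u \<in> fst S" "w \<in> fst S" using y' z WG_def by auto
    then have "e \<in> snd S" using ce uw by blast
    then have "(u,w) \<in> R" "(w,u) \<in> R" by (auto simp: R_def crel_def u_def w_def)
    then have "(y', z) \<in> R" using uw by auto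
    then show ?thesis using y' z by (auto simp: WG_def)
  qed
  have Y: "\<exists>y'\<in>WG. r y' = y" if "(r v, y) \<in> RD\<^sup>*" for y
    using that
  proof (induction rule: rtrancl_induct)
    case base then show ?case using v by (auto simp: WG_def)
  next
    case (step y1 y2)
    from step.IH obtain y1' where y1': "y1' \<in> WG" "r y1' = y1" by blast
    from step.hyps(2) obtain a where a: "a \<in> snd T" and
      dir: "(y1 = r (tail G a) \<and> y2 = r (head G a)) \<or> (y1 = r (head G a) \<and> y2 = r (tail G a))"
      by (auto simp: RD_def crel_def tailD headD)
    have aS: "a \<in> snd S" using a T by (auto simp: sle_def cimg_def)
    have ends: "tail G a \<in> fst S" "head G a \<in> fst S" using cl aS by (auto simp: closed_sg_def)
    have Ra: "(tail G a, head G a) \<in> R" "(head G a, tail G a) \<in> R" using aS by (auto simp: R_def crel_def)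
    show ?case using dir
    proof
      assume d: "y1 = r (tail G a) \<and> y2 = r (head G a)"
      then have "tail G a \<in> WG" using X[OF y1'(1) ends(1)] y1'(2) by simp
      then have "head G a \<in> WG" using Ra ends by (auto simp: WG_def)
      then show ?thesis using d by blast
    next
      assume d: "y1 = r (head G a) \<and> y2 = r (tail G a)"
      then have "head G a \<in> WG" using X[OF y1'(1) ends(2)] y1'(2) by simp
      then have "tail G a \<in> WG" using Ra ends by (auto simp: WG_def)
      then show ?thesis using d by blast
    qed
  qed
  have CG: "sg_comp G S v = (WG, {a \<in> snd S. tail G a \<in> WG \<and> head G a \<in> WG})"
    by (simp add: sg_comp_eq WG_def R_def)
  have CD: "sg_comp D T (r v) = ({y \<in> fst T. (r v, y) \<in> RD\<^sup>*},
      {a \<in> snd T. tail D a \<in> {y \<in> fst T. (r v, y) \<in> RD\<^sup>*} \<and> head D a \<in> {y \<in> fst T. (r v, y) \<in> RD\<^sup>*}})"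
    by (simp add: sg_comp_eq RD_def)
  have E: "a \<in> snd S - {e} \<and> tail G a \<in> WG \<and> head G a \<in> WG"
    if a: "a \<in> snd T" "(r v, tail D a) \<in> RD\<^sup>*" "(r v, head D a) \<in> RD\<^sup>*" for a
  proof -
    have aS: "a \<in> snd S - {e}" using a T by (auto simp: sle_def cimg_def)
    have ends: "tail G a \<in> fst S" "head G a \<in> fst S" using cl aS by (auto simp: closed_sg_def)
    obtain t' where "t' \<in> WG" "r t' = r (tail G a)" using Y[OF a(2)] by (auto simp: tailD)
    then have "tail G a \<in> WG" using X ends by metis
    moreover obtain h' where "h' \<in> WG" "r h' = r (head G a)" using Y[OF a(3)] by (auto simp: headD)
    then have "head G a \<in> WG" using X ends by metis
    ultimately show ?thesis using aS by blast
  qed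
  show ?thesis unfolding CG CD sle_def cimg_def using Y E by auto
qed

lemma J0:
  assumes "is_arrow G z"
    and ic: "(\<forall>S\<in>F0 L G z. u \<in> fst S \<or> w \<in> fst S) \<longrightarrow> (\<forall>S\<in>F0 L G z. u \<in> fst S) \<or> (\<forall>S\<in>F0 L G z. w \<in> fst S)"
  shows "sle (Cn L D 0 (H z)) (cimg (Cn L G 0 z))"
proof -
  have "sle (Cn L D 0 (H z)) (sg_Inter (cimg ` F0 L G z))"
  proof (rule sg_Inter_glb)
    fix S' assume "S' \<in> cimg ` F0 L G z"
    then obtain q where q: "gpath G (fst z) q (snd (snd z))" "uequiv L q (fst (snd z))"
      and S': "S' = cimg (span G (fst z) q)" by (auto simp: F0_def)
    have "span D (r (fst z)) (hw e q) \<in> F0 L D (H z)"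
      using path_H[OF q(1)] uequiv_filter[OF q(2)] by (auto simp: F0_def H_def)
    then have "sle (Cn L D 0 (H z)) (span D (r (fst z)) (hw e q))"
      unfolding Cn0_F0 by (rule sg_Inter_lb)
    then show "sle (Cn L D 0 (H z)) S'" using S' span_H sle_trans by blast
  qed
  then show ?thesis using inter_cimg[OF F0_ne[OF assms(1)] ic] sle_trans unfolding Cn0_F0 by blast
qed

lemma Jstep:
  assumes "is_arrow G z"
    and K: "\<And>y. is_arrow G y \<Longrightarrow> sle (Pn L D n (H y)) (cimg (Pn L G n y))"
    and ic: "(\<forall>S\<in>F1 L G n z. u \<in> fst S \<or> w \<in> fst S) \<longrightarrow> (\<forall>S\<in>F1 L G n z. u \<in> fst S) \<or> (\<forall>S\<in>F1 L G n z. w \<in> fst S)"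
  shows "sle (Cn L D (Suc n) (H z)) (cimg (Cn L G (Suc n) z))"
proof -
  have "sle (Cn L D (Suc n) (H z)) (sg_Inter (cimg ` F1 L G n z))"
  proof (rule sg_Inter_glb)
    fix S' assume "S' \<in> cimg ` F1 L G n z"
    then obtain ys where ys: "factorization L G ys z" and S': "S' = cimg (sg_Union (Pn L G n ` set ys))"
      by (auto simp: F1_def)
    have "sg_Union (Pn L D n ` set (map H ys)) \<in> F1 L D n (H z)"
      unfolding F1_def mem_Collect_eq by (rule exI[of _ "map H ys"]) (simp add: fact_H[OF ys])
    then have 1: "sle (Cn L D (Suc n) (H z)) (sg_Union (Pn L D n ` set (map H ys)))"
      unfolding CnS_F1 by (rule sg_Inter_lb)
    have 2: "sle (sg_Union (Pn L D n ` set (map H ys))) (sg_Union (cimg ` Pn L G n ` set ys))"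
    proof (rule sg_Union_lub)
      fix S assume "S \<in> Pn L D n ` set (map H ys)"
      then obtain y where y: "y \<in> set ys" "S = Pn L D n (H y)" by auto
      have "is_arrow G y" using ys y(1) by (auto simp: factorization_def)
      then have "sle S (cimg (Pn L G n y))" using K y(2) by simp
      moreover have "sle (cimg (Pn L G n y)) (sg_Union (cimg ` Pn L G n ` set ys))"
        using y(1) by (intro sg_Union_ub) auto
      ultimately show "sle S (sg_Union (cimg ` Pn L G n ` set ys))" using sle_trans by blast
    qed
    have 3: "sle (sg_Union (cimg ` Pn L G n ` set ys)) S'"
      unfolding S' by (rule cimg_Union)
    show "sle (Cn L D (Suc n) (H z)) S'" using 1 2 3 sle_trans by blast
  qed
  then show ?thesis using inter_cimg[OF F1_ne[OF assms(1)] ic] sle_trans unfolding CnS_F1 by blast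
qed

lemma Kn:
  assumes "is_arrow G z" and J: "sle (Cn L D n (H z)) (cimg (Cn L G n z))"
    and ce: "u \<noteq> w \<longrightarrow> u \<in> fst (Cn L G n z) \<longrightarrow> w \<in> fst (Cn L G n z) \<longrightarrow> e \<in> snd (Cn L G n z)"
  shows "sle (Pn L D n (H z)) (cimg (Pn L G n z))"
  unfolding Pn_def using comp_cimg[OF closed_Cn start_Cn[OF assms(1)] ce J]
  by (simp add: H_def)

end



lemma Pinf_Pn: "v \<in> fst (Pinf L G x) \<Longrightarrow> v \<in> fst (Pn L G n x)"
  by (auto simp: Pinf_def)

lemma Pn_closed: "closed_sg G (Pn L G n x)" by (simp add: Pn_def closed_comp)

lemma comp_edge:
  assumes "closed_sg G C" "a \<in> snd C" "tail G a \<in> fst (sg_comp G C v) \<or> head G a \<in> fst (sg_comp G C v)"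
  shows "a \<in> snd (sg_comp G C v)"
proof -
  have R: "(tail G a, head G a) \<in> crel G (snd C)" "(head G a, tail G a) \<in> crel G (snd C)"
    using assms(2) by (auto simp: crel_def)
  have "tail G a \<in> fst C" "head G a \<in> fst C" using assms(1,2) by (auto simp: closed_sg_def)
  then show ?thesis using assms(3) R
    by (auto simp: sg_comp_eq intro: rtrancl_into_rtrancl assms(2))
qed

context ctr begin

theorem loop_case:
  assumes uw: "u = w" and PD: "propP L D"
  shows "propP L G"
proof -
  have rid: "r v = v" for v using uw by (simp add: r_def)
  have K: "sle (Pn L D n (H z)) (cimg (Pn L G n z))" if "is_arrow G z" for n z
    using that
  proof (induction n arbitrary: z)
    case 0
    then show ?case using J0[OF 0] Kn[OF 0] uw by simp
  next
    case (Suc n)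
    then show ?case using Jstep[OF Suc.prems Suc.IH] Kn[OF Suc.prems] uw by simp
  qed
  show ?thesis unfolding propP_def
  proof (intro allI impI)
    fix x assume x: "is_arrow G x"
    have "snd (snd x) \<in> fst (Pn L G n x)" for n
    proof -
      have "snd (snd (H x)) \<in> fst (Pinf L D (H x))"
        using PD arrow_H[OF x] unfolding propP_def by blast
      then have "snd (snd (H x)) \<in> fst (Pn L D n (H x))" by (rule Pinf_Pn)
      then show ?thesis using K[OF x, of n] by (auto simp: sle_def cimg_def H_def rid)
    qed
    then show "snd (snd x) \<in> fst (Pinf L G x)" by (auto simp: Pinf_def Pn_def)
  qed
qed

end



lemma span_Cons: "span G (lsrc G l) (l # q) =
   (insert (lsrc G l) (fst (span G (ltgt G l) q)), insert (fst l) (snd (span G (ltgt G l) q)))"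
  by (auto simp: span_def)

lemma gpath_end_in_span: "gpath G i q j \<Longrightarrow> j \<in> fst (span G i q)"
proof (induction q arbitrary: i)
  case Nil then show ?case by (simp add: span_def)
next
  case (Cons l q)
  then have "lsrc G l = i" "gpath G (ltgt G l) q j" by auto
  then show ?case using Cons.IH span_Cons[of G l q] by auto
qed

lemma gpath_arcs: "gpath G i q j \<Longrightarrow> snd (span G i q) \<subseteq> arcs G"
proof (induction q arbitrary: i)
  case Nil then show ?case by (simp add: span_def)
next
  case (Cons l q)
  then have "lsrc G l = i" "gpath G (ltgt G l) q j" "fst l \<in> arcs G" by auto
  then show ?case using Cons.IH span_Cons[of G l q] by auto
qed

lemma arcs_Cn: "is_arrow G x \<Longrightarrow> snd (Cn L G n x) \<subseteq> arcs G"
proof (induction n arbitrary: x)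
  case 0
  obtain S where S: "S \<in> F0 L G x" using F0_ne[OF 0] by blast
  then have "snd S \<subseteq> arcs G" by (auto simp: F0_def dest: gpath_arcs)
  then show ?case unfolding Cn0_F0 using S by auto
next
  case (Suc n)
  obtain S where S: "S \<in> F1 L G n x" using F1_ne[OF Suc.prems] by blast
  then obtain ys where ys: "factorization L G ys x" "S = sg_Union (Pn L G n ` set ys)"
    by (auto simp: F1_def)
  have "snd (Pn L G n y) \<subseteq> arcs G" if "y \<in> set ys" for y
  proof -
    have "is_arrow G y" using ys(1) that by (auto simp: factorization_def)
    then have "snd (Cn L G n y) \<subseteq> arcs G" by (rule Suc.IH)
    then show ?thesis using comp_sub[of G "Cn L G n y" "fst y"]
      by (auto simp: Pn_def sle_def)
  qed
  then have "snd S \<subseteq> arcs G" using ys(2) by auto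
  then show ?case unfolding CnS_F1 using S by auto
qed

lemma arcs_Pn: "is_arrow G x \<Longrightarrow> snd (Pn L G n x) \<subseteq> arcs G"
  using arcs_Cn comp_sub[of G "Cn L G n x" "fst x"] by (fastforce simp: Pn_def sle_def)

locale bridge = ctr +
  fixes sd :: "'a \<Rightarrow> bool"
  assumes sd_u: "sd u" and sd_w: "\<not> sd w"
    and sd_arc: "\<And>a. a \<in> arcs G \<Longrightarrow> a \<noteq> e \<Longrightarrow> sd (tail G a) = sd (head G a)"
begin

lemma uw: "u \<noteq> w" using sd_u sd_w by auto

definition ConnP :: "('a,'b) sgraph \<Rightarrow> 'a \<Rightarrow> bool" where
  "ConnP S i \<longleftrightarrow> (\<forall>y \<in> fst S. sd y \<noteq> sd i \<longrightarrow> e \<in> snd S)"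

definition crossing :: "('a,'b) arrow \<Rightarrow> bool" where
  "crossing z \<longleftrightarrow> sd (fst z) \<noteq> sd (snd (snd z))"

lemma letter_sd: "fst l \<in> arcs G \<Longrightarrow> fst l \<noteq> e \<Longrightarrow> sd (lsrc G l) = sd (ltgt G l)"
  using sd_arc by (auto simp: lsrc_def ltgt_def)

lemma path_cross: "gpath G i q j \<Longrightarrow> y \<in> fst (span G i q) \<Longrightarrow> sd y \<noteq> sd i \<Longrightarrow> e \<in> snd (span G i q)"
proof (induction q arbitrary: i)
  case Nil then show ?case by (simp add: span_def)
next
  case (Cons l q)
  then have l: "lsrc G l = i" "gpath G (ltgt G l) q j" "fst l \<in> arcs G" by auto
  show ?case
  proof (cases "fst l = e")
    case True then show ?thesis using l(1) span_Cons[of G l q] by simp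
  next
    case False
    then have "sd (ltgt G l) = sd i" using letter_sd l by metis
    moreover have "y \<in> fst (span G (ltgt G l) q)" using Cons.prems l(1) span_Cons[of G l q] by auto
    ultimately show ?thesis using Cons.IH[OF l(2)] Cons.prems l(1) span_Cons[of G l q] by auto
  qed
qed

lemma ConnP_span: "gpath G i q j \<Longrightarrow> ConnP (span G i q) i"
  using path_cross by (auto simp: ConnP_def)

lemma ConnP_Inter: "(\<And>S. S \<in> F \<Longrightarrow> ConnP S i) \<Longrightarrow> ConnP (sg_Inter F) i"
  by (auto simp: ConnP_def)

lemma reach_cross:
  assumes "(v, y) \<in> (crel G (snd S))\<^sup>*" "sd y \<noteq> sd v" "snd S \<subseteq> arcs G"
  shows "e \<in> snd S \<and> ((v,u) \<in> (crel G (snd S))\<^sup>* \<or> (v,w) \<in> (crel G (snd S))\<^sup>*)"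
  using assms(1,2)
proof (induction rule: rtrancl_induct)
  case base then show ?case by simp
next
  case (step y1 y2)
  show ?case
  proof (cases "sd y1 = sd v")
    case False then show ?thesis using step.IH by blast
  next
    case True
    from step.hyps(2) obtain a where a: "a \<in> snd S"
      and d: "(y1 = tail G a \<and> y2 = head G a) \<or> (y1 = head G a \<and> y2 = tail G a)"
      by (auto simp: crel_def)
    have "a = e" using sd_arc[of a] a assms(3) d True step.prems by auto
    then show ?thesis using a d step.hyps(1) u_def w_def by auto
  qed
qed

lemma ConnP_comp:
  assumes "closed_sg G S" "snd S \<subseteq> arcs G"
  shows "ConnP (sg_comp G S v) v"
  unfolding ConnP_def
proof (intro ballI impI)
  fix y assume y: "y \<in> fst (sg_comp G S v)" "sd y \<noteq> sd v"
  then have "(v,y) \<in> (crel G (snd S))\<^sup>*" by (simp add: sg_comp_eq)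
  from reach_cross[OF this y(2) assms(2)] have
    e: "e \<in> snd S" and reach: "(v,u) \<in> (crel G (snd S))\<^sup>* \<or> (v,w) \<in> (crel G (snd S))\<^sup>*" by auto
  have "u \<in> fst S" "w \<in> fst S" using assms(1) e by (auto simp: closed_sg_def u_def w_def)
  then have "tail G e \<in> fst (sg_comp G S v) \<or> head G e \<in> fst (sg_comp G S v)"
    using reach by (auto simp: sg_comp_eq u_def w_def)
  then show "e \<in> snd (sg_comp G S v)" by (rule comp_edge[OF assms(1) e])
qed

lemma ConnP_Pn: "is_arrow G z \<Longrightarrow> ConnP (Pn L G n z) (fst z)"
  unfolding Pn_def by (rule ConnP_comp[OF closed_Cn arcs_Cn])

lemma IC_of_ConnP:
  assumes "\<And>S. S \<in> F \<Longrightarrow> ConnP S i \<and> closed_sg G S"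
  shows "(\<forall>S\<in>F. u \<in> fst S \<or> w \<in> fst S) \<longrightarrow> (\<forall>S\<in>F. u \<in> fst S) \<or> (\<forall>S\<in>F. w \<in> fst S)"
proof
  assume h: "\<forall>S\<in>F. u \<in> fst S \<or> w \<in> fst S"
  have ew: "u \<in> fst S \<and> w \<in> fst S" if "S \<in> F" "e \<in> snd S" for S
    using assms[OF that(1)] that(2) by (auto simp: closed_sg_def u_def w_def)
  show "(\<forall>S\<in>F. u \<in> fst S) \<or> (\<forall>S\<in>F. w \<in> fst S)"
  proof (cases "sd i")
    case True
    have "u \<in> fst S" if "S \<in> F" for S
      using h that assms[OF that] ew[OF that] sd_w True by (auto simp: ConnP_def)
    then show ?thesis by blast
  next
    case False
    have "w \<in> fst S" if "S \<in> F" for S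
      using h that assms[OF that] ew[OF that] sd_u False by (auto simp: ConnP_def)
    then show ?thesis by blast
  qed
qed

lemma ce_of_ConnP:
  assumes "ConnP S i" "closed_sg G S"
  shows "u \<noteq> w \<longrightarrow> u \<in> fst S \<longrightarrow> w \<in> fst S \<longrightarrow> e \<in> snd S"
  using assms sd_u sd_w by (cases "sd i") (auto simp: ConnP_def)

lemma chain_sd:
  assumes f: "factorization L G fs z" and nc: "\<forall>y\<in>set fs. sd (fst y) = sd (snd (snd y))"
  shows "\<forall>t < length fs. sd (fst (fs ! t)) = sd (fst z)"
proof (intro allI impI)
  fix t assume "t < length fs"
  then show "sd (fst (fs ! t)) = sd (fst z)"
  proof (induction t)
    case 0 then show ?case using f by (auto simp: factorization_def hd_conv_nth)
  next
    case (Suc t)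
    have "snd (snd (fs ! t)) = fst (fs ! Suc t)" using f Suc.prems by (auto simp: factorization_def)
    moreover have "sd (fst (fs ! t)) = sd (snd (snd (fs ! t)))" using nc Suc.prems by auto
    ultimately show ?case using Suc by auto
  qed
qed

lemma chain_cross:
  assumes f: "factorization L G fs z"
  shows "(\<exists>y\<in>set fs. crossing y) \<or> ((\<forall>y\<in>set fs. sd (fst y) = sd (fst z)) \<and> \<not> crossing z)"
proof (cases "\<exists>y\<in>set fs. crossing y")
  case True then show ?thesis by blast
next
  case False
  then have nc: "\<forall>y\<in>set fs. sd (fst y) = sd (snd (snd y))" by (auto simp: crossing_def)
  have c: "\<forall>t < length fs. sd (fst (fs ! t)) = sd (fst z)" by (rule chain_sd[OF f nc])
  have all: "\<forall>y\<in>set fs. sd (fst y) = sd (fst z)"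
  proof
    fix y assume "y \<in> set fs"
    then obtain t where "t < length fs" "y = fs ! t" by (auto simp: in_set_conv_nth)
    then show "sd (fst y) = sd (fst z)" using c by simp
  qed
  have ne: "fs \<noteq> []" using f by (simp add: factorization_def)
  then have "last fs \<in> set fs" by simp
  then have "sd (snd (snd (last fs))) = sd (fst z)" using all nc by auto
  then have "\<not> crossing z" using f by (auto simp: factorization_def crossing_def)
  then show ?thesis using all by blast
qed

end



context bridge begin

lemma I2:
  assumes PD: "propP L D" and z: "is_arrow G z"
    and E: "e \<in> snd (Cn L G n z)"
    and K: "sle (Pn L D n (H z)) (cimg (Pn L G n z))" and cr: "crossing z"
  shows "e \<in> snd (Pn L G n z)"
proof -
  have "snd (snd (H z)) \<in> fst (Pinf L D (H z))"
    using PD arrow_H[OF z] unfolding propP_def by blast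
  then have "snd (snd (H z)) \<in> fst (Pn L D n (H z))" by (rule Pinf_Pn)
  then have "r (snd (snd z)) \<in> r ` fst (Pn L G n z)" using K by (auto simp: sle_def cimg_def H_def)
  then obtain y where y: "y \<in> fst (Pn L G n z)" "r y = r (snd (snd z))" by auto
  have CQ: "ConnP (Pn L G n z) (fst z)" by (rule ConnP_Pn[OF z])
  show ?thesis
  proof (cases "sd y = sd (fst z)")
    case False then show ?thesis using CQ y(1) by (auto simp: ConnP_def)
  next
    case True
    then have "y \<noteq> snd (snd z)" using cr by (auto simp: crossing_def)
    then have "y = u \<or> y = w" using y(2) by (auto simp: r_def split: if_splits)
    then have "tail G e \<in> fst (Pn L G n z) \<or> head G e \<in> fst (Pn L G n z)"
      using y(1) u_def w_def by auto
    then show ?thesis unfolding Pn_def by (rule comp_edge[OF closed_Cn E])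
  qed
qed

definition Inv :: "(nat word \<times> nat word) set \<Rightarrow> nat \<Rightarrow> ('a,'b) arrow \<Rightarrow> bool" where
  "Inv L n z \<longleftrightarrow> ConnP (Cn L G n z) (fst z) \<and> (crossing z \<longrightarrow> e \<in> snd (Cn L G n z))
     \<and> sle (Pn L D n (H z)) (cimg (Pn L G n z)) \<and> (crossing z \<longrightarrow> e \<in> snd (Pn L G n z))"

lemma Inv_all:
  assumes PD: "propP L D"
  shows "is_arrow G z \<Longrightarrow> Inv L n z"
proof (induction n arbitrary: z)
  case 0
  note z = 0
  have CP: "ConnP (Cn L G 0 z) (fst z)"
    unfolding Cn0_F0 by (rule ConnP_Inter) (auto simp: F0_def intro: ConnP_span)
  have E: "crossing z \<longrightarrow> e \<in> snd (Cn L G 0 z)"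
  proof
    assume c: "crossing z"
    have "e \<in> snd S" if "S \<in> F0 L G z" for S
      using that c path_cross gpath_end_in_span by (fastforce simp: F0_def crossing_def)
    then show "e \<in> snd (Cn L G 0 z)" unfolding Cn0_F0 by auto
  qed
  have J: "sle (Cn L D 0 (H z)) (cimg (Cn L G 0 z))"
    by (rule J0[OF z IC_of_ConnP]) (auto simp: F0_def intro: ConnP_span closed_span)
  have K: "sle (Pn L D 0 (H z)) (cimg (Pn L G 0 z))"
    by (rule Kn[OF z J ce_of_ConnP[OF CP closed_Cn]])
  show ?case unfolding Inv_def using CP E K I2[OF PD z _ K] by blast
next
  case (Suc n)
  note z = Suc.prems
  have IH: "Inv L n y" if "is_arrow G y" for y using Suc.IH that by blast
  have U: "ConnP S (fst z) \<and> closed_sg G S \<and> (crossing z \<longrightarrow> e \<in> snd S)" if S: "S \<in> F1 L G n z" for S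
  proof -
    obtain fs where fs: "factorization L G fs z" "S = sg_Union (Pn L G n ` set fs)"
      using S by (auto simp: F1_def)
    have arr: "is_arrow G y" if "y \<in> set fs" for y using fs(1) that by (auto simp: factorization_def)
    have sub: "snd (Pn L G n y) \<subseteq> snd S" if "y \<in> set fs" for y using fs(2) that by auto
    have cf: "e \<in> snd S" if "\<exists>y\<in>set fs. crossing y"
      using that arr IH sub unfolding Inv_def by blast
    have "ConnP S (fst z)" unfolding ConnP_def
    proof (intro ballI impI)
      fix v assume v: "v \<in> fst S" "sd v \<noteq> sd (fst z)"
      then obtain y where y: "y \<in> set fs" "v \<in> fst (Pn L G n y)" using fs(2) by auto
      show "e \<in> snd S"
      proof (cases "sd v = sd (fst y)")
        case False
        have "e \<in> snd (Pn L G n y)" using ConnP_Pn[OF arr[OF y(1)], of L n] y(2) False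
          unfolding ConnP_def by blast
        then show ?thesis using sub[OF y(1)] by blast
      next
        case True
        then have "sd (fst y) \<noteq> sd (fst z)" using v by simp
        then show ?thesis using chain_cross[OF fs(1)] y(1) cf by blast
      qed
    qed
    moreover have "closed_sg G S" unfolding fs(2) by (rule closed_Union) (auto simp: Pn_closed)
    moreover have "crossing z \<longrightarrow> e \<in> snd S" using chain_cross[OF fs(1)] cf by blast
    ultimately show ?thesis by blast
  qed
  have CP: "ConnP (Cn L G (Suc n) z) (fst z)"
    unfolding CnS_F1 by (rule ConnP_Inter) (use U in blast)
  have E: "crossing z \<longrightarrow> e \<in> snd (Cn L G (Suc n) z)"
    unfolding CnS_F1 using U by auto
  have J: "sle (Cn L D (Suc n) (H z)) (cimg (Cn L G (Suc n) z))"
    by (rule Jstep[OF z _ IC_of_ConnP[of "F1 L G n z" "fst z"]]) (use IH U in \<open>auto simp: Inv_def\<close>)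
  have K: "sle (Pn L D (Suc n) (H z)) (cimg (Pn L G (Suc n) z))"
    by (rule Kn[OF z J ce_of_ConnP[OF CP closed_Cn]])
  show ?case unfolding Inv_def using CP E K I2[OF PD z _ K] by blast
qed

theorem bridge_case:
  assumes PD: "propP L D"
  shows "propP L G"
  unfolding propP_def
proof (intro allI impI)
  fix x assume x: "is_arrow G x"
  have "snd (snd x) \<in> fst (Pn L G n x)" for n
  proof -
    have I: "Inv L n x" by (rule Inv_all[OF PD x])
    have "snd (snd (H x)) \<in> fst (Pinf L D (H x))"
      using PD arrow_H[OF x] unfolding propP_def by blast
    then have "snd (snd (H x)) \<in> fst (Pn L D n (H x))" by (rule Pinf_Pn)
    then have "r (snd (snd x)) \<in> r ` fst (Pn L G n x)" using I by (auto simp: Inv_def sle_def cimg_def H_def)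
    then obtain y where y: "y \<in> fst (Pn L G n x)" "r y = r (snd (snd x))" by auto
    show ?thesis
    proof (cases "y = snd (snd x)")
      case True then show ?thesis using y by simp
    next
      case False
      then have yt: "(y = u \<and> snd (snd x) = w) \<or> (y = w \<and> snd (snd x) = u)"
        using y(2) by (auto simp: r_def split: if_splits)
      have "e \<in> snd (Pn L G n x)"
      proof (cases "crossing x")
        case True then show ?thesis using I by (simp add: Inv_def)
      next
        case False
        then have "sd y \<noteq> sd (fst x)" using yt sd_u sd_w by (auto simp: crossing_def)
        then show ?thesis using ConnP_Pn[OF x] y(1) by (auto simp: ConnP_def)
      qed
      then have "tail G e \<in> fst (Pn L G n x) \<and> head G e \<in> fst (Pn L G n x)"
        using Pn_closed[of G L n x] unfolding closed_sg_def by blast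
      then show ?thesis using yt u_def w_def by auto
    qed
  qed
  then show "snd (snd x) \<in> fst (Pinf L G x)" by (auto simp: Pinf_def Pn_def)
qed

end



definition SP :: "('v,'e) pre_digraph \<Rightarrow> ('v \<times> 'v) set" where
  "SP G = (\<Union>a\<in>arcs G. {(tail G a, head G a), (head G a, tail G a)})"

lemma conn_iff: "connected G \<longleftrightarrow> verts G \<noteq> {} \<and>
   (\<forall>a\<in>verts G. \<forall>b\<in>verts G. (a,b) \<in> rtrancl_on (verts G) (SP G))"
  by (simp add: connected_def strongly_connected_def reachable_def mk_symmetric_def SP_def)

lemma SP_sym: "(SP G)\<inverse> = SP G" by (auto simp: SP_def)

lemma rtrancl_on_sym:
  assumes "(a,b) \<in> rtrancl_on V (SP G)" shows "(b,a) \<in> rtrancl_on V (SP G)"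
  using rtrancl_on_converseI[OF assms] SP_sym by metis

lemma iso_refl: "wf_digraph H \<Longrightarrow> digraph_iso H H"
  unfolding digraph_iso_def
  apply (rule exI[of _ "\<lparr>iso_verts = id, iso_arcs = id, iso_head = head H, iso_tail = tail H\<rparr>"])
  apply (simp add: pre_digraph.digraph_isomorphism_def app_iso_def)
  done

lemma minor_step_arcs: "minor_step H H' \<Longrightarrow> arcs H' \<subseteq> arcs H"
  by (induction rule: minor_step.induct)
     (auto simp: contract_arc_def reverse_arc_def pre_digraph.del_arc_def pre_digraph.del_vert_def Let_def)

lemma minor_steps_arcs: "minor_step\<^sup>*\<^sup>* H H' \<Longrightarrow> arcs H' \<subseteq> arcs H"
  by (induction rule: rtranclp_induct) (auto dest: minor_step_arcs)

lemma minor_card: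
  assumes "is_minor G D" "finite (arcs D)"
  shows "card (arcs G) \<le> card (arcs D)"
proof -
  obtain H where H: "minor_step\<^sup>*\<^sup>* D H" "digraph_iso H G" using assms(1) by (auto simp: is_minor_def)
  obtain f where f: "G = app_iso f H" using H(2) by (auto simp: digraph_iso_def)
  have sub: "arcs H \<subseteq> arcs D" by (rule minor_steps_arcs[OF H(1)])
  then have fin: "finite (arcs H)" using assms(2) finite_subset by blast
  have "card (arcs G) = card (iso_arcs f ` arcs H)" using f by (simp add: app_iso_def)
  also have "\<dots> \<le> card (arcs H)" by (rule card_image_le[OF fin])
  also have "\<dots> \<le> card (arcs D)" by (rule card_mono[OF assms(2) sub])
  finally show ?thesis .
qed

lemma minor_one: "minor_step G D \<Longrightarrow> wf_digraph D \<Longrightarrow> is_minor D G"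
  unfolding is_minor_def using iso_refl by blast

context fin_digraph begin

lemma not_minor_smaller:
  assumes "e \<in> arcs G" "arcs D = arcs G - {e}"
  shows "\<not> is_minor G D"
proof
  assume "is_minor G D"
  moreover have "finite (arcs D)" using assms by simp
  ultimately have "card (arcs G) \<le> card (arcs D)" by (rule minor_card)
  moreover have "card (arcs G) > 0" using assms(1) card_gt_0_iff by fastforce
  then have "card (arcs D) < card (arcs G)" using assms by simp
  ultimately show False by simp
qed

lemma loop_false:
  assumes conn: "connected G" and nP: "\<not> propP L G"
    and min: "\<forall>D :: ('a,'b) pre_digraph. is_minor D G \<and> connected D \<and> \<not> propP L D \<longrightarrow> is_minor G D"
    and e: "e \<in> arcs G" "tail G e = head G e"
  shows False
proof -
  define D where "D = del_arc e"
  define r where "r = (\<lambda>v. if v = head G e then tail G e else v)"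
  have rid: "r v = v" for v using e(2) by (simp add: r_def)
  interpret c: ctr G D e "tail G e" "head G e" r
    by unfold_locales (auto simp: D_def r_def e(1) e(2))
  have "\<not> propP L D" using c.loop_case[OF e(2)] nP by blast
  moreover have "is_minor D G" unfolding D_def
    by (rule minor_one) (auto intro: minor_step.ms_del_arc e(1))
  moreover have "connected D"
  proof -
    have "(a,b) \<in> rtrancl_on (verts G) (SP D)" if "(a,b) \<in> rtrancl_on (verts G) (SP G)" for a b
      using that
    proof (induction rule: rtrancl_on_induct)
      case base then show ?case by simp
    next
      case (step y z)
      then obtain c where c: "c \<in> arcs G" "(y,z) = (tail G c, head G c) \<or> (y,z) = (head G c, tail G c)"
        by (auto simp: SP_def)
      show ?case
      proof (cases "c = e")
        case True then show ?thesis using c e(2) step.IH by auto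
      next
        case False
        then have "(y,z) \<in> SP D" using c by (auto simp: SP_def D_def)
        then show ?thesis using step.IH step.hyps by (auto intro: rtrancl_on_into_rtrancl_on)
      qed
    qed
    then show ?thesis using conn by (simp add: conn_iff D_def)
  qed
  ultimately have "is_minor G D" using min by blast
  moreover have "\<not> is_minor G D" by (rule not_minor_smaller[OF e(1)]) (simp add: D_def)
  ultimately show False by blast
qed

end



context fin_digraph begin

lemma bridge_false:
  assumes conn: "connected G" and nP: "\<not> propP L G"
    and min: "\<forall>D :: ('a,'b) pre_digraph. is_minor D G \<and> connected D \<and> \<not> propP L D \<longrightarrow> is_minor G D"
    and e: "e \<in> arcs G" "tail G e \<noteq> head G e" and nc: "\<not> connected (del_arc e)"
  shows False
proof -
  define u where "u = tail G e"
  define w where "w = head G e"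
  define V where "V = verts G"
  define sd where "sd v \<longleftrightarrow> (u, v) \<in> rtrancl_on V (SP (del_arc e))" for v
  have uV: "u \<in> V" "w \<in> V" using e(1) by (auto simp: u_def w_def V_def)
  have uw: "u \<noteq> w" using e(2) by (simp add: u_def w_def)
  have sdu: "sd u" using uV by (simp add: sd_def)
  have SPa: "(tail G a, head G a) \<in> SP (del_arc e)" "(head G a, tail G a) \<in> SP (del_arc e)"
    if "a \<in> arcs G" "a \<noteq> e" for a using that by (auto simp: SP_def)
  have sda: "sd (tail G a) = sd (head G a)" if "a \<in> arcs G" "a \<noteq> e" for a
    using SPa[OF that] that(1) unfolding sd_def V_def
    by (auto intro: rtrancl_on_into_rtrancl_on)
  have sdw: "\<not> sd w"
  proof
    assume "sd w"
    then have uw1: "(u,w) \<in> rtrancl_on V (SP (del_arc e))" by (simp add: sd_def)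
    then have uw2: "(w,u) \<in> rtrancl_on V (SP (del_arc e))" by (rule rtrancl_on_sym)
    have "(a,b) \<in> rtrancl_on V (SP (del_arc e))" if "(a,b) \<in> rtrancl_on V (SP G)" for a b
      using that
    proof (induction rule: rtrancl_on_induct)
      case base then show ?case by simp
    next
      case (step y z)
      then obtain c where c: "c \<in> arcs G" "(y,z) = (tail G c, head G c) \<or> (y,z) = (head G c, tail G c)"
        by (auto simp: SP_def)
      show ?case
      proof (cases "c = e")
        case True
        then have "(y,z) \<in> rtrancl_on V (SP (del_arc e))" using c uw1 uw2 by (auto simp: u_def w_def)
        then show ?thesis using step.IH rtrancl_on_trans by metis
      next
        case False
        then have "(y,z) \<in> SP (del_arc e)" using c by (auto simp: SP_def)
        then show ?thesis using step.IH step.hyps by (auto intro: rtrancl_on_into_rtrancl_on)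
      qed
    qed
    then have "connected (del_arc e)" using conn by (simp add: conn_iff V_def)
    then show False using nc by simp
  qed
  define D where "D = contract_arc G e"
  define r where "r = (\<lambda>v. if v = w then u else v)"
  have vD: "verts D = r ` verts G"
  proof -
    have "r ` verts G = verts G - {w}" using uV uw by (auto simp: r_def V_def image_def)
    then show ?thesis by (simp add: D_def contract_arc_def w_def)
  qed
  interpret b: bridge G D e u w r sd
    apply unfold_locales
    using e(1) vD sdu sdw sda
    by (auto simp: D_def contract_arc_def Let_def u_def w_def r_def)
  have "\<not> propP L D" using b.bridge_case nP by blast
  moreover have wfD: "wf_digraph D"
    using uV uw by unfold_locales (auto simp: D_def contract_arc_def Let_def u_def w_def V_def)
  have "is_minor D G" unfolding D_def
    by (rule minor_one[OF minor_step.ms_contract[OF e]]) (use wfD D_def in simp)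
  moreover have "connected D"
  proof -
    have "(r a, r b) \<in> rtrancl_on (verts D) (SP D)" if "(a,b) \<in> rtrancl_on V (SP G)" for a b
      using that
    proof (induction rule: rtrancl_on_induct)
      case base then show ?case using vD by (simp add: V_def)
    next
      case (step y z)
      then obtain c where c: "c \<in> arcs G" "(y,z) = (tail G c, head G c) \<or> (y,z) = (head G c, tail G c)"
        by (auto simp: SP_def)
      show ?case
      proof (cases "c = e")
        case True
        then have "r y = r z" using c by (auto simp: r_def u_def w_def)
        then show ?thesis using step.IH by simp
      next
        case False
        then have "(r y, r z) \<in> SP D" using c
          by (auto simp: SP_def D_def contract_arc_def Let_def u_def w_def r_def)
        moreover have "r z \<in> verts D" using vD step.hyps V_def by auto
        ultimately show ?thesis using step.IH by (auto intro: rtrancl_on_into_rtrancl_on)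
      qed
    qed
    moreover have "r a = a" if "a \<in> verts D" for a
      using that by (auto simp: D_def contract_arc_def r_def w_def)
    moreover have "verts D \<subseteq> V" by (auto simp: D_def contract_arc_def V_def)
    moreover have "verts D \<noteq> {}" using uV uw vD by (auto simp: V_def)
    ultimately show ?thesis using conn unfolding conn_iff V_def
      by (metis subsetD)
  qed
  ultimately have "is_minor G D" using min by blast
  moreover have "\<not> is_minor G D" by (rule not_minor_smaller[OF e(1)]) (simp add: D_def contract_arc_def)
  ultimately show False by blast
qed

end

theorem proposition3p3:
  fixes L :: "(nat word \<times> nat word) set" and G :: "('v,'e) pre_digraph"
  assumes "fin_digraph G" and "connected G" and "\<not> propP L G"
    and "\<forall>D :: ('v,'e) pre_digraph. is_minor D G \<and> connected D \<and> \<not> propP L D \<longrightarrow> is_minor G D"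
  shows "two_edge_connected G \<and> (\<forall>e \<in> arcs G. tail G e \<noteq> head G e)"
proof -
  interpret fin_digraph G by fact
  have nl: "\<forall>e \<in> arcs G. tail G e \<noteq> head G e"
    using loop_false[OF assms(2,3,4)] by blast
  have "\<forall>e \<in> arcs G. connected (pre_digraph.del_arc G e)"
    using bridge_false[OF assms(2,3,4)] nl by blast
  then show ?thesis using nl assms(2) by (simp add: two_edge_connected_def)
qed


end
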